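(* Let $g\in\mathcal{PSD}$ with $\{T^k(x):x\in X^{\rm in},k\in\mathbb N\}\subseteq\operatorname{dom}(g)$. Then $g$ is $(X^{\rm in},T,\varphi)$-compatible if and only if there exists an $(X^{\rm in},T,\varphi)$-certificate of compatibility for $g$.
   Context: Standing data: nonempty $X^{\rm in}\subseteq\mathbb R^d$, $T:\mathbb R^d\to\mathbb R^d$, $\varphi:\mathbb R^d\to\mathbb R$ with $\varphi(0)=0$, $\nu_k=\sup_{x\in X^{\rm in}}\varphi(T^k(x))$ assumed finite for all $k$; $G^{>}_\nu=\{k:\nu_k>\limsup_n\nu_n\}$. $\mathcal{PSD}$: functions $P:\mathbb R^d\to[0,+\infty]$ taking some value in $(0,+\infty)$; $\operatorname{dom}(g)=\{x:g(x)<+\infty\}$. $I^\varphi=\overline{\operatorname{conv}}\{\varphi(T^k(x)):k\in\mathbb N,x\in X^{\rm in}\}$ (closed convex hull in $\mathbb R$). $\mathrm{SC}$ is the set of $\alpha:\mathbb R\to\mathbb R$ for which there is an interval $I$ with $\alpha(I)=[0,1]$ and $\alpha$ strictly increasing and continuous on $\operatorname{conv}(I^\varphi\cup I)$. An $(X^{\rm in},T,\varphi)$-certificate of compatibility for $g$ is $\alpha\in\mathrm{SC}$ such that $\alpha(\nu_k)>0$ for some $k\in G^{>}_\nu$ and $\alpha(\varphi(T^k(x)))\le g(T^k(x))$ for all $k\in\mathbb N$, $x\in X^{\rm in}$. $g$ is $(X^{\rm in},T,\varphi)$-compatible at $k\in G^{>}_\nu$ if there exist $\varepsilon>0,\eta>0$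 such that for all $x\in X^{\rm in}$, $j\in\mathbb N$ with $\varphi(T^j(x))>\nu_k-\eta$ one has $g(T^j(x))>\varepsilon$; $g$ is $(X^{\rm in},T,\varphi)$-compatible if it is so at some $k\in G^{>}_\nu$. *)

theory Defs
  imports "HOL-Analysis.Analysis" "HOL-Library.Extended_Real"
begin

definition nu :: "('a \<Rightarrow> 'a) \<Rightarrow> ('a \<Rightarrow> real) \<Rightarrow> 'a set \<Rightarrow> nat \<Rightarrow> real" where
  "nu T \<phi> Xin k = (SUP x\<in>Xin. \<phi> ((T ^^ k) x))"

definition Ggt :: "('a \<Rightarrow> 'a) \<Rightarrow> ('a \<Rightarrow> real) \<Rightarrow> 'a set \<Rightarrow> nat set" where
  "Ggt T \<phi> Xin = {k. ereal (nu T \<phi> Xin k) > limsup (\<lambda>n. ereal (nu T \<phi> Xin n))}"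

definition PSD :: "('a \<Rightarrow> ereal) set" where
  "PSD = {P. (\<forall>x. 0 \<le> P x) \<and> (\<exists>x. 0 < P x \<and> P x < \<infinity>)}"

definition dom_ext :: "('a \<Rightarrow> ereal) \<Rightarrow> 'a set" where
  "dom_ext g = {x. g x < \<infinity>}"

definition Iphi :: "('a \<Rightarrow> 'a) \<Rightarrow> ('a \<Rightarrow> real) \<Rightarrow> 'a set \<Rightarrow> real set" where
  "Iphi T \<phi> Xin = closure (convex hull {\<phi> ((T ^^ k) x) | k x. x \<in> Xin})"

definition SC :: "('a \<Rightarrow> 'a) \<Rightarrow> ('a \<Rightarrow> real) \<Rightarrow> 'a set \<Rightarrow> (real \<Rightarrow> real) set" where
  "SC T \<phi> Xin = {\<alpha>. \<exists>I::real set. is_interval I \<and> \<alpha> ` I = {0..1} \<and>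
      strict_mono_on (convex hull (Iphi T \<phi> Xin \<union> I)) \<alpha> \<and>
      continuous_on (convex hull (Iphi T \<phi> Xin \<union> I)) \<alpha>}"

definition certificate :: "'a set \<Rightarrow> ('a \<Rightarrow> 'a) \<Rightarrow> ('a \<Rightarrow> real) \<Rightarrow> ('a \<Rightarrow> ereal) \<Rightarrow> (real \<Rightarrow> real) \<Rightarrow> bool" where
  "certificate Xin T \<phi> g \<alpha> \<longleftrightarrow> \<alpha> \<in> SC T \<phi> Xin \<and>
     (\<exists>k\<in>Ggt T \<phi> Xin. \<alpha> (nu T \<phi> Xin k) > 0) \<and>
     (\<forall>k. \<forall>x\<in>Xin. ereal (\<alpha> (\<phi> ((T ^^ k) x))) \<le> g ((T ^^ k) x))"

definition compatible_at :: "'a set \<Rightarrow> ('a \<Rightarrow> 'a) \<Rightarrow> ('a \<Rightarrow> real) \<Rightarrow> ('a \<Rightarrow> ereal) \<Rightarrow> nat \<Rightarrow> bool" where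
  "compatible_at Xin T \<phi> g k \<longleftrightarrow> k \<in> Ggt T \<phi> Xin \<and>
     (\<exists>\<epsilon>>0. \<exists>\<eta>>0. \<forall>x\<in>Xin. \<forall>j. \<phi> ((T ^^ j) x) > nu T \<phi> Xin k - \<eta> \<longrightarrow> g ((T ^^ j) x) > ereal \<epsilon>)"

definition compatible :: "'a set \<Rightarrow> ('a \<Rightarrow> 'a) \<Rightarrow> ('a \<Rightarrow> real) \<Rightarrow> ('a \<Rightarrow> ereal) \<Rightarrow> bool" where
  "compatible Xin T \<phi> g \<longleftrightarrow> (\<exists>k\<in>Ggt T \<phi> Xin. compatible_at Xin T \<phi> g k)"

end

theory Submission
  imports Defs
begin

lemma nu_ub:
  assumes "\<And>k. bdd_above ((\<lambda>x. \<phi> ((T ^^ k) x)) ` Xin)" "x \<in> Xin"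
  shows "\<phi> ((T ^^ j) x) \<le> nu T \<phi> Xin j"
  unfolding nu_def using assms by (intro cSUP_upper) auto

lemma nu_in_Iphi:
  assumes "\<And>k. bdd_above ((\<lambda>x. \<phi> ((T ^^ k) x)) ` Xin)" "Xin \<noteq> {}"
  shows "nu T \<phi> Xin k \<in> Iphi T \<phi> Xin"
proof -
  let ?W = "(\<lambda>x. \<phi> ((T ^^ k) x)) ` Xin"
  have s: "Sup ?W \<in> closure ?W" using assms by (intro closure_contains_Sup) auto
  have "?W \<subseteq> convex hull {\<phi> ((T ^^ k) x) | k x. x \<in> Xin}"
    by (rule subset_trans[OF _ hull_subset]) blast
  then have c: "closure ?W \<subseteq> closure (convex hull {\<phi> ((T ^^ k) x) | k x. x \<in> Xin})"
    by (rule closure_mono)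
  show ?thesis unfolding nu_def Iphi_def by (rule subsetD[OF c s])
qed

lemma val_in_Iphi:
  assumes "x \<in> Xin"
  shows "\<phi> ((T ^^ j) x) \<in> Iphi T \<phi> Xin"
proof -
  have "\<phi> ((T ^^ j) x) \<in> {\<phi> ((T ^^ k) x) | k x. x \<in> Xin}" using assms by blast
  then have "\<phi> ((T ^^ j) x) \<in> convex hull {\<phi> ((T ^^ k) x) | k x. x \<in> Xin}"
    by (rule subsetD[OF hull_subset])
  then show ?thesis unfolding Iphi_def by (rule subsetD[OF closure_subset])
qed

theorem mainTheorem17:
  fixes Xin :: "(real ^ 'd) set" and T :: "real ^ 'd \<Rightarrow> real ^ 'd"
    and \<phi> :: "real ^ 'd \<Rightarrow> real" and g :: "real ^ 'd \<Rightarrow> ereal"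
  assumes "Xin \<noteq> {}"
    and "\<phi> 0 = 0"
    and "\<And>k. bdd_above ((\<lambda>x. \<phi> ((T ^^ k) x)) ` Xin)"
    and "g \<in> PSD"
    and "{(T ^^ k) x | k x. x \<in> Xin} \<subseteq> dom_ext g"
  shows "compatible Xin T \<phi> g \<longleftrightarrow> (\<exists>\<alpha>. certificate Xin T \<phi> g \<alpha>)"
proof
  assume "compatible Xin T \<phi> g"
  then obtain k \<epsilon> \<eta> where kG: "k \<in> Ggt T \<phi> Xin" and ep: "\<epsilon> > 0" and et: "\<eta> > 0"
    and H: "\<forall>x\<in>Xin. \<forall>j. \<phi> ((T ^^ j) x) > nu T \<phi> Xin k - \<eta> \<longrightarrow> g ((T ^^ j) x) > ereal \<epsilon>"
    unfolding compatible_def compatible_at_def by blast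
  define \<nu> where "\<nu> = nu T \<phi> Xin"
  have "limsup (\<lambda>n. ereal (\<nu> n)) < ereal (\<nu> k)" using kG unfolding Ggt_def \<nu>_def by simp
  then have "eventually (\<lambda>n. ereal (\<nu> n) < ereal (\<nu> k)) sequentially"
    by (rule Limsup_lessD)
  then obtain N where N: "\<And>n. n \<ge> N \<Longrightarrow> \<nu> n < \<nu> k"
    unfolding eventually_sequentially by auto
  define M where "M = Max (insert (\<nu> k) (\<nu> ` {..<N}))"
  have Mb: "\<nu> n \<le> M" for n
  proof (cases "n < N")
    case True then show ?thesis unfolding M_def by (intro Max_ge) auto
  next
    case False
    then have "\<nu> n < \<nu> k" using N by auto
    moreover have "\<nu> k \<le> M" unfolding M_def by (intro Max_ge) auto
    ultimately show ?thesis by simp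
  qed
  define a where "a = \<nu> k - \<eta>"
  have Ma: "M > a" using Mb[of k] et unfolding a_def by simp
  define c where "c = \<epsilon> / (M - a)"
  have c: "c > 0" using Ma ep unfolding c_def by simp
  define \<alpha> where "\<alpha> = (\<lambda>t. c * (t - a))"
  have smono: "strict_mono_on A \<alpha>" for A
    by (rule strict_mono_onI) (use c in \<open>simp add: \<alpha>_def\<close>)
  have cont: "continuous_on A \<alpha>" for A unfolding \<alpha>_def by (intro continuous_intros)
  have img: "\<alpha> ` {a..a + 1/c} = {0..1}"
  proof
    show "\<alpha> ` {a..a + 1/c} \<subseteq> {0..1}"
    proof
      fix y assume "y \<in> \<alpha> ` {a..a + 1/c}"
      then obtain t where t: "a \<le> t" "t \<le> a + 1/c" "y = c * (t - a)" unfolding \<alpha>_def by auto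
      have "c * (t - a) \<le> c * (1/c)" using t c by (intro mult_left_mono) auto
      then show "y \<in> {0..1}" using t c by auto
    qed
  next
    show "{0..1} \<subseteq> \<alpha> ` {a..a + 1/c}"
    proof
      fix y :: real assume y: "y \<in> {0..1}"
      have "\<alpha> (a + y / c) = y" unfolding \<alpha>_def using c by simp
      moreover have "a + y / c \<in> {a..a+1/c}" using y c by (auto simp: divide_right_mono)
      ultimately show "y \<in> \<alpha> ` {a..a + 1/c}" by (metis image_eqI)
    qed
  qed
  have SC: "\<alpha> \<in> SC T \<phi> Xin" unfolding SC_def
    by (intro CollectI exI[of _ "{a..a+1/c}"] conjI img smono cont)
       (simp add: is_interval_convex_1)
  have pos: "\<alpha> (\<nu> k) > 0" unfolding \<alpha>_def a_def using c et by simp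
  have bound: "ereal (\<alpha> (\<phi> ((T ^^ j) x))) \<le> g ((T ^^ j) x)" if x: "x \<in> Xin" for j x
  proof (cases "\<phi> ((T ^^ j) x) > a")
    case True
    then have g: "g ((T ^^ j) x) > ereal \<epsilon>" using H x unfolding a_def \<nu>_def by blast
    have "\<phi> ((T ^^ j) x) \<le> M" using nu_ub[OF assms(3) x, of j] Mb[of j] unfolding \<nu>_def by simp
    then have "\<alpha> (\<phi> ((T ^^ j) x)) \<le> c * (M - a)" unfolding \<alpha>_def using c
      by (intro mult_left_mono) auto
    also have "\<dots> = \<epsilon>" unfolding c_def using Ma by simp
    finally have "ereal (\<alpha> (\<phi> ((T ^^ j) x))) \<le> ereal \<epsilon>" by simp
    then show ?thesis using g by (rule order_trans[OF _ less_imp_le])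
  next
    case False
    then have "\<alpha> (\<phi> ((T ^^ j) x)) \<le> 0" unfolding \<alpha>_def using c
      by (simp add: mult_nonneg_nonpos)
    have "g ((T ^^ j) x) \<ge> 0" using assms(4) unfolding PSD_def by auto
    from \<open>\<alpha> (\<phi> ((T ^^ j) x)) \<le> 0\<close> have "ereal (\<alpha> (\<phi> ((T ^^ j) x))) \<le> 0" by simp
    then show ?thesis using \<open>g ((T ^^ j) x) \<ge> 0\<close> by (rule order_trans)
  qed
  have "certificate Xin T \<phi> g \<alpha>" unfolding certificate_def
    using SC pos kG bound unfolding \<nu>_def by blast
  then show "\<exists>\<alpha>. certificate Xin T \<phi> g \<alpha>" by blast
next
  assume "\<exists>\<alpha>. certificate Xin T \<phi> g \<alpha>"
  then obtain \<alpha> k where SC: "\<alpha> \<in> SC T \<phi> Xin" and kG: "k \<in> Ggt T \<phi> Xin"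
    and pos: "\<alpha> (nu T \<phi> Xin k) > 0"
    and bd: "\<forall>k. \<forall>x\<in>Xin. ereal (\<alpha> (\<phi> ((T ^^ k) x))) \<le> g ((T ^^ k) x)"
    unfolding certificate_def by blast
  from SC obtain I where "is_interval I \<and> \<alpha> ` I = {0..1} \<and>
      strict_mono_on (convex hull (Iphi T \<phi> Xin \<union> I)) \<alpha> \<and>
      continuous_on (convex hull (Iphi T \<phi> Xin \<union> I)) \<alpha>"
    unfolding SC_def mem_Collect_eq by (elim exE)
  then have sm: "strict_mono_on (convex hull (Iphi T \<phi> Xin \<union> I)) \<alpha>"
    and co: "continuous_on (convex hull (Iphi T \<phi> Xin \<union> I)) \<alpha>" by blast+
  define S where "S = convex hull (Iphi T \<phi> Xin \<union> I)"
  have IS: "Iphi T \<phi> Xin \<subseteq> S" unfolding S_def by (rule subset_trans[OF _ hull_subset]) simp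
  define v where "v = nu T \<phi> Xin k"
  have vS: "v \<in> S" using IS nu_in_Iphi[OF assms(3) assms(1)] unfolding v_def by blast
  obtain d where d: "d > 0" and dH: "\<And>y. y \<in> S \<Longrightarrow> dist y v < d \<Longrightarrow> dist (\<alpha> y) (\<alpha> v) < \<alpha> v / 2"
  proof -
    have "continuous_on S \<alpha>" using co unfolding S_def .
    then have "\<forall>e>0. \<exists>d>0. \<forall>y\<in>S. dist y v < d \<longrightarrow> dist (\<alpha> y) (\<alpha> v) < e"
      using vS unfolding continuous_on_iff by blast
    moreover have "\<alpha> v / 2 > 0" using pos unfolding v_def by simp
    ultimately have "\<exists>d>0. \<forall>y\<in>S. dist y v < d \<longrightarrow> dist (\<alpha> y) (\<alpha> v) < \<alpha> v / 2" by blast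
    then show ?thesis using that by blast
  qed
  have HH: "\<forall>x\<in>Xin. \<forall>j. \<phi> ((T ^^ j) x) > nu T \<phi> Xin k - d \<longrightarrow> g ((T ^^ j) x) > ereal (\<alpha> v / 2)"
  proof (intro ballI allI impI)
    fix x j assume x: "x \<in> Xin" and t: "\<phi> ((T ^^ j) x) > nu T \<phi> Xin k - d"
    let ?t = "\<phi> ((T ^^ j) x)"
    have tS: "?t \<in> S" using val_in_Iphi[OF x] IS by blast
    have "\<alpha> ?t > \<alpha> v / 2"
    proof (cases "?t \<ge> v")
      case True
      then have "\<alpha> ?t \<ge> \<alpha> v"
        using strict_mono_onD[OF sm[folded S_def] vS tS] by (cases "?t = v") auto
      then show ?thesis using pos unfolding v_def by simp
    next
      case False
      then have "dist ?t v < d" using t unfolding v_def dist_real_def by auto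
      then have "dist (\<alpha> ?t) (\<alpha> v) < \<alpha> v / 2" using dH tS by blast
      then show ?thesis unfolding dist_real_def using abs_ge_minus_self[of "\<alpha> ?t - \<alpha> v"] by linarith
    qed
    then show "g ((T ^^ j) x) > ereal (\<alpha> v / 2)"
    proof -
      have "ereal (\<alpha> v / 2) < ereal (\<alpha> ?t)" using \<open>\<alpha> ?t > \<alpha> v / 2\<close> by simp
      also have "\<dots> \<le> g ((T ^^ j) x)" using bd x by blast
      finally show ?thesis .
    qed
  qed
  have "compatible_at Xin T \<phi> g k"
  proof -
    have e: "\<alpha> v / 2 > 0" using pos unfolding v_def by simp
    show ?thesis unfolding compatible_at_def
      by (rule conjI[OF kG exI[of _ "\<alpha> v / 2"]], rule conjI[OF e exI[of _ d]], rule conjI[OF d HH])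
  qed
  then show "compatible Xin T \<phi> g" unfolding compatible_def by (rule bexI[OF _ kG])
qed

end
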